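(* For all $n\in\mathbb N$: $\mathsf d_n\otimes\mathsf I_n\mathrel{;}\mathsf I_n\otimes\mathsf e_n\ \sim\ \mathsf I_n\ \sim\ \mathsf I_n\otimes\mathsf d_n\mathrel{;}\mathsf e_n\otimes\mathsf I_n$, where $\otimes$ binds tighter than $;$.
   Context: Wire calculus. Fix a set $\Sigma$ of signals and $\iota\notin\Sigma$; $L=\Sigma\cup\{\iota\}$; $\vec\iota$ denotes a word of $\iota$'s. Prefix strings are words over atoms: signal variables $x$, binders $\lambda x$, $\iota$, constants $\sigma\in\Sigma$. Terms: $P::= Y \mid P\mathrel{;}P\mid P\otimes P\mid \frac{u}{v}.P\mid P+P\mid \mu Y{:}\tau.P$ ($\tau$ a sort $(k,l)$). In $\frac{u}{v}.P$, variables $x$ with $\lambda x$ in $uv$ are bound (set $bd$). Sorting: $P:(k,n),R:(n,l)\Rightarrow P\mathrel{;}R:(k,l)$; $P:(k,l),Q:(m,n)\Rightarrow P\otimes Q:(k+m,l+n)$; $\frac{u}{v}.P:(|u|,|v|)$ when $P$ has that sort; $\mu Y{:}\tau.P:\tau$; $P+Q:\tau$ for $P,Q:\tau$. Closed terms only. Transitions $P\xrightarrow[\vec b]{\vec a}Q$ are generated by: (Refl) $P\xrightarrow[\vec\iota]{\vec\iota}P$; ($\iota$L) $P\xrightarrow[\vec\iota]{\vec\iota}R\xrightarrow[\vec b]{\vec a}Q$ gives $P\xrightarrow[\vec b]{\vec a}Q$; ($\iota$R) $P\xrightarrow[\vec b]{\vec a}R\xrightarrow[\vec\iota]{\vec\iota}Q$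 gives $P\xrightarrow[\vec b]{\vec a}Q$; (Cut) $P\xrightarrow[\vec c]{\vec a}Q$, $R\xrightarrow[\vec b]{\vec c}S$ give $P\mathrel{;}R\xrightarrow[\vec b]{\vec a}Q\mathrel{;}S$; (Ten) $P\xrightarrow[\vec b]{\vec a}Q$, $R\xrightarrow[\vec d]{\vec c}S$ give $P\otimes R\xrightarrow[\vec b\vec d]{\vec a\vec c}Q\otimes S$; (Pref) for each $\sigma:bd\to L$, $\frac{u}{v}.P\xrightarrow[v|_\sigma]{u|_\sigma}P|_\sigma$; (Rec) $P[\mu Y.P/Y]\xrightarrow[\vec b]{\vec a}Q$ gives $\mu Y.P\xrightarrow[\vec b]{\vec a}Q$; ($+\iota$) $P\xrightarrow[\vec\iota]{\vec\iota}Q$, $R\xrightarrow[\vec\iota]{\vec\iota}S$ give $P+R\xrightarrow[\vec\iota]{\vec\iota}Q+S$; ($+$L/R) $P\xrightarrow[\vec b]{\vec a}Q$ with $\vec a\vec b$ not all $\iota$ gives $P+R\xrightarrow[\vec b]{\vec a}Q$ and $R+P\xrightarrow[\vec b]{\vec a}Q$. Bisimilarity $\sim$: $P\sim Q$ iff some relation $S\ni(P,Q)$ satisfies: if $(P',Q')\in S$ and $P'\xrightarrow[\vec b]{\vec a}P''$ then $Q'\xrightarrow[\vec b]{\vec a}Q''$ with $(P'',Q'')\in S$, and symmetrically. Constants: $\mathsf I_k=\mu Y.\frac{\lambda x_1\cdots\lambda x_k}{\lambda x_1\cdots\lambda x_k}.Y:(k,k)$, $\mathsf I=\mathsf I_1$;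 $\mathsf d=\mu Y.\frac{\epsilon}{\lambda x\lambda x}.Y:(0,2)$; $\mathsf e=\mu Y.\frac{\lambda x\lambda x}{\epsilon}.Y:(2,0)$ ($\epsilon$ empty string). Recursively: $\mathsf d_1=\mathsf d$, $\mathsf d_{n+1}=\mathsf d\mathrel{;}(\mathsf I\otimes\mathsf d_n\otimes\mathsf I)$; $\mathsf e_1=\mathsf e$, $\mathsf e_{n+1}=(\mathsf I_n\otimes\mathsf e\otimes\mathsf I_n)\mathrel{;}\mathsf e_n$; and $\mathsf d_0=\mathsf e_0=\mathsf I_0=0:=\mu Y{:}(0,0).Y$. So $\mathsf d_n:(0,2n)$, $\mathsf e_n:(2n,0)$. *)

theory Defs
  imports Main
begin

text \<open>Signals are elements of the type 's; a label in L = Sigma + {iota} is an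
  "'s option", where None stands for iota and Some s for the signal s.\<close>

type_synonym 's lab = "'s option"

datatype 's atom =
    AVar nat
  | ABind nat
  | AIota
  | AConst 's

datatype 's wterm =
    TVar nat
  | Seq "'s wterm" "'s wterm"
  | Ten "'s wterm" "'s wterm"
  | Pref "'s atom list" "'s atom list" "'s wterm"
  | Plus "'s wterm" "'s wterm"
  | Mu nat "nat \<times> nat" "'s wterm"

fun binders :: "'s atom list \<Rightarrow> nat set" where
  "binders [] = {}"
| "binders (ABind x # w) = insert x (binders w)"
| "binders (_ # w) = binders w"

definition bd :: "'s atom list \<Rightarrow> 's atom list \<Rightarrow> nat set" where
  "bd u v = binders u \<union> binders v"

fun inst_atom :: "(nat \<Rightarrow> 's lab) \<Rightarrow> 's atom \<Rightarrow> 's lab" where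
  "inst_atom \<sigma> (AVar x) = \<sigma> x"
| "inst_atom \<sigma> (ABind x) = \<sigma> x"
| "inst_atom \<sigma> AIota = None"
| "inst_atom \<sigma> (AConst s) = Some s"

definition inst_word :: "(nat \<Rightarrow> 's lab) \<Rightarrow> 's atom list \<Rightarrow> 's lab list" where
  "inst_word \<sigma> w = map (inst_atom \<sigma>) w"

fun lab_atom :: "'s lab \<Rightarrow> 's atom" where
  "lab_atom None = AIota"
| "lab_atom (Some s) = AConst s"

fun subst_atom :: "(nat \<Rightarrow> 's lab) \<Rightarrow> nat set \<Rightarrow> 's atom \<Rightarrow> 's atom" where
  "subst_atom \<sigma> B (AVar x) = (if x \<in> B then lab_atom (\<sigma> x) else AVar x)"
| "subst_atom \<sigma> B a = a"

fun subst_sig :: "(nat \<Rightarrow> 's lab) \<Rightarrow> nat set \<Rightarrow> 's wterm \<Rightarrow> 's wterm" where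
  "subst_sig \<sigma> B (TVar Y) = TVar Y"
| "subst_sig \<sigma> B (Seq P R) = Seq (subst_sig \<sigma> B P) (subst_sig \<sigma> B R)"
| "subst_sig \<sigma> B (Ten P R) = Ten (subst_sig \<sigma> B P) (subst_sig \<sigma> B R)"
| "subst_sig \<sigma> B (Plus P R) = Plus (subst_sig \<sigma> B P) (subst_sig \<sigma> B R)"
| "subst_sig \<sigma> B (Mu Y \<tau> P) = Mu Y \<tau> (subst_sig \<sigma> B P)"
| "subst_sig \<sigma> B (Pref u v P) =
     (let B' = B - bd u v in
      Pref (map (subst_atom \<sigma> B') u) (map (subst_atom \<sigma> B') v) (subst_sig \<sigma> B' P))"

text \<open>Substitution P[N/Y] of a (closed) term N for the recursion variable Y.\<close>
fun subst_rec :: "nat \<Rightarrow> 's wterm \<Rightarrow> 's wterm \<Rightarrow> 's wterm" where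
  "subst_rec Y N (TVar Z) = (if Z = Y then N else TVar Z)"
| "subst_rec Y N (Seq P R) = Seq (subst_rec Y N P) (subst_rec Y N R)"
| "subst_rec Y N (Ten P R) = Ten (subst_rec Y N P) (subst_rec Y N R)"
| "subst_rec Y N (Plus P R) = Plus (subst_rec Y N P) (subst_rec Y N R)"
| "subst_rec Y N (Pref u v P) = Pref u v (subst_rec Y N P)"
| "subst_rec Y N (Mu Z \<tau> P) = (if Z = Y then Mu Z \<tau> P else Mu Z \<tau> (subst_rec Y N P))"

inductive wsort :: "(nat \<rightharpoonup> nat \<times> nat) \<Rightarrow> 's wterm \<Rightarrow> nat \<times> nat \<Rightarrow> bool" where
  sVar:  "\<Gamma> Y = Some \<tau> \<Longrightarrow> wsort \<Gamma> (TVar Y) \<tau>"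
| sSeq:  "wsort \<Gamma> P (k, n) \<Longrightarrow> wsort \<Gamma> R (n, l) \<Longrightarrow> wsort \<Gamma> (Seq P R) (k, l)"
| sTen:  "wsort \<Gamma> P (k, l) \<Longrightarrow> wsort \<Gamma> Q (m, n) \<Longrightarrow> wsort \<Gamma> (Ten P Q) (k + m, l + n)"
| sPref: "wsort \<Gamma> P (length u, length v) \<Longrightarrow> wsort \<Gamma> (Pref u v P) (length u, length v)"
| sMu:   "wsort (\<Gamma>(Y \<mapsto> \<tau>)) P \<tau> \<Longrightarrow> wsort \<Gamma> (Mu Y \<tau> P) \<tau>"
| sPlus: "wsort \<Gamma> P \<tau> \<Longrightarrow> wsort \<Gamma> Q \<tau> \<Longrightarrow> wsort \<Gamma> (Plus P Q) \<tau>"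

section \<open>Transitions  P --a/b--> Q  (a top/left word, b bottom/right word)\<close>

definition iotas :: "nat \<Rightarrow> 's lab list" where
  "iotas k = replicate k None"

definition all_iota :: "'s lab list \<Rightarrow> bool" where
  "all_iota w \<longleftrightarrow> (\<forall>c \<in> set w. c = None)"

inductive trans :: "'s wterm \<Rightarrow> 's lab list \<Rightarrow> 's lab list \<Rightarrow> 's wterm \<Rightarrow> bool" where
  Refl:   "wsort Map.empty P (k, l) \<Longrightarrow> trans P (iotas k) (iotas l) P"
| IotaL:  "trans P (iotas k) (iotas l) R \<Longrightarrow> trans R a b Q \<Longrightarrow> trans P a b Q"
| IotaR:  "trans P a b R \<Longrightarrow> trans R (iotas k) (iotas l) Q \<Longrightarrow> trans P a b Q"
| Cut:    "trans P a c Q \<Longrightarrow> trans R c b S \<Longrightarrow> trans (Seq P R) a b (Seq Q S)"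
| Tensor: "trans P a b Q \<Longrightarrow> trans R c d S \<Longrightarrow> trans (Ten P R) (a @ c) (b @ d) (Ten Q S)"
| Prefix: "trans (Pref u v P) (inst_word \<sigma> u) (inst_word \<sigma> v) (subst_sig \<sigma> (bd u v) P)"
| Rec:    "trans (subst_rec Y (Mu Y \<tau> P) P) a b Q \<Longrightarrow> trans (Mu Y \<tau> P) a b Q"
| PlusI:  "trans P (iotas k) (iotas l) Q \<Longrightarrow> trans R (iotas k) (iotas l) S
             \<Longrightarrow> trans (Plus P R) (iotas k) (iotas l) (Plus Q S)"
| PlusL:  "trans P a b Q \<Longrightarrow> \<not> all_iota (a @ b) \<Longrightarrow> trans (Plus P R) a b Q"
| PlusR:  "trans P a b Q \<Longrightarrow> \<not> all_iota (a @ b) \<Longrightarrow> trans (Plus R P) a b Q"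

definition bisimulation :: "('s wterm \<times> 's wterm) set \<Rightarrow> bool" where
  "bisimulation S \<longleftrightarrow>
     (\<forall>(P, Q) \<in> S.
        (\<forall>a b P'. trans P a b P' \<longrightarrow> (\<exists>Q'. trans Q a b Q' \<and> (P', Q') \<in> S)) \<and>
        (\<forall>a b Q'. trans Q a b Q' \<longrightarrow> (\<exists>P'. trans P a b P' \<and> (P', Q') \<in> S)))"

definition bisim :: "'s wterm \<Rightarrow> 's wterm \<Rightarrow> bool" (infix "\<sim>w" 50) where
  "P \<sim>w Q \<longleftrightarrow> (\<exists>S. (P, Q) \<in> S \<and> bisimulation S)"

definition zero :: "'s wterm" where
  "zero = Mu 0 (0, 0) (TVar 0)"

text \<open>I_k = mu Y. (lambda x1..lambda xk)/(lambda x1..lambda xk). Y  for k \<ge> 1, I_0 = 0;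
  signal variable x_i is named i, recursion variable Y is named 0.\<close>
definition Iw :: "nat \<Rightarrow> 's wterm" where
  "Iw k = (if k = 0 then zero
           else Mu 0 (k, k) (Pref (map ABind [1..<k+1]) (map ABind [1..<k+1]) (TVar 0)))"

definition dd :: "'s wterm" where
  "dd = Mu 0 (0, 2) (Pref [] [ABind 1, ABind 1] (TVar 0))"

definition ee :: "'s wterm" where
  "ee = Mu 0 (2, 0) (Pref [ABind 1, ABind 1] [] (TVar 0))"

text \<open>Tensor is read left-associatively: I (x) d_n (x) I = (I (x) d_n) (x) I.\<close>
fun dn :: "nat \<Rightarrow> 's wterm" where
  "dn 0 = zero"
| "dn (Suc 0) = dd"
| "dn (Suc (Suc n)) = Seq dd (Ten (Ten (Iw 1) (dn (Suc n))) (Iw 1))"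

fun en :: "nat \<Rightarrow> 's wterm" where
  "en 0 = zero"
| "en (Suc 0) = ee"
| "en (Suc (Suc n)) = Seq (Ten (Ten (Iw (Suc n)) ee) (Iw (Suc n))) (en (Suc n))"

end

theory Submission
  imports Defs
begin

definition stab :: "('s lab list \<times> 's lab list) set \<Rightarrow> 's wterm set \<Rightarrow> bool" where
  "stab R S \<longleftrightarrow> (\<forall>P\<in>S. (\<forall>a b P'. trans P a b P' \<longrightarrow> (a,b)\<in>R \<and> P'\<in>S)
                          \<and> (\<forall>a b. (a,b)\<in>R \<longrightarrow> (\<exists>P'. trans P a b P' \<and> P'\<in>S)))"

definition inR :: "('s lab list \<times> 's lab list) set \<Rightarrow> 's wterm \<Rightarrow> bool" where
  "inR R P \<longleftrightarrow> (\<exists>S. P \<in> S \<and> stab R S)"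

lemma inR_step: "inR R P \<Longrightarrow> trans P a b P' \<Longrightarrow> (a,b)\<in>R \<and> inR R P'"
proof -
  assume "inR R P" "trans P a b P'"
  then obtain S where S: "P \<in> S" "stab R S" unfolding inR_def by blast
  then have "(a,b)\<in>R \<and> P'\<in>S" using \<open>trans P a b P'\<close> unfolding stab_def by blast
  then show ?thesis using S(2) unfolding inR_def by blast
qed

lemma inR_ex: "inR R P \<Longrightarrow> (a,b)\<in>R \<Longrightarrow> \<exists>P'. trans P a b P' \<and> inR R P'"
proof -
  assume "inR R P" "(a,b)\<in>R"
  then obtain S where S: "P \<in> S" "stab R S" unfolding inR_def by blast
  then obtain P' where "trans P a b P'" "P'\<in>S" using \<open>(a,b)\<in>R\<close> unfolding stab_def by blast
  then show ?thesis using S(2) unfolding inR_def by blast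
qed

lemma inR_coind:
  assumes "P \<in> X"
    and "\<And>P a b P'. P\<in>X \<Longrightarrow> trans P a b P' \<Longrightarrow> (a,b)\<in>R \<and> P' \<in> X"
    and "\<And>P a b. P\<in>X \<Longrightarrow> (a,b)\<in>R \<Longrightarrow> \<exists>P'. trans P a b P' \<and> P'\<in>X"
  shows "inR R P"
proof -
  have "stab R X" unfolding stab_def using assms(2,3) by blast
  then show ?thesis unfolding inR_def using assms(1) by blast
qed

lemma inR_bisim: "inR R P \<Longrightarrow> inR R Q \<Longrightarrow> P \<sim>w Q"
  unfolding bisim_def
proof (intro exI conjI)
  let ?S = "{(P,Q). inR R P \<and> inR R Q}"
  assume "inR R P" "inR R Q"
  then show "(P,Q) \<in> ?S" by simp
  show "bisimulation ?S"
    unfolding bisimulation_def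
  proof (rule ballI)
    fix x assume "x \<in> ?S"
    then obtain P Q where x: "x = (P,Q)" "inR R P" "inR R Q" by blast
    have A: "\<exists>Q'. trans Q a b Q' \<and> (P',Q') \<in> ?S" if "trans P a b P'" for a b P'
    proof -
      have "(a,b)\<in>R" "inR R P'" using inR_step x(2) that by blast+
      then obtain Q' where "trans Q a b Q'" "inR R Q'" using x(3) inR_ex by blast
      then show ?thesis using \<open>inR R P'\<close> by blast
    qed
    have B: "\<exists>P'. trans P a b P' \<and> (P',Q') \<in> ?S" if "trans Q a b Q'" for a b Q'
    proof -
      have "(a,b)\<in>R" "inR R Q'" using inR_step x(3) that by blast+
      then obtain P' where "trans P a b P'" "inR R P'" using x(2) inR_ex by blast
      then show ?thesis using \<open>inR R Q'\<close> by blast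
    qed
    show "case x of (P, Q) \<Rightarrow>
            (\<forall>a b P'. trans P a b P' \<longrightarrow> (\<exists>Q'. trans Q a b Q' \<and> (P', Q') \<in> ?S)) \<and>
            (\<forall>a b Q'. trans Q a b Q' \<longrightarrow> (\<exists>P'. trans P a b P' \<and> (P', Q') \<in> ?S))"
      unfolding x(1) using A B by simp
  qed
qed

inductive_cases wsSeq: "wsort \<Gamma> (Seq P Q) \<tau>"
inductive_cases wsTen: "wsort \<Gamma> (Ten P Q) \<tau>"
inductive_cases wsMu: "wsort \<Gamma> (Mu Y t P) \<tau>"
inductive_cases wsPref: "wsort \<Gamma> (Pref u v P) \<tau>"

definition tens :: "('s lab list \<times> 's lab list) set \<Rightarrow> ('s lab list \<times> 's lab list) set \<Rightarrow> ('s lab list \<times> 's lab list) set" where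
  "tens R1 R2 = {(a@c, b@d) | a b c d. (a,b)\<in>R1 \<and> (c,d)\<in>R2}"

lemma iotas_add: "iotas (k+m) = iotas k @ iotas m"
  unfolding iotas_def by (simp add: replicate_add)

lemma seq_step:
  assumes "trans T a b T'" "T \<in> {Seq P Q | P Q. inR R1 P \<and> inR R2 Q}"
  shows "(a,b) \<in> R1 O R2 \<and> T' \<in> {Seq P Q | P Q. inR R1 P \<and> inR R2 Q}"
  using assms
proof (induction rule: trans.induct)
  case (Refl P k l)
  then obtain P1 Q1 where e: "P = Seq P1 Q1" "inR R1 P1" "inR R2 Q1" by blast
  from Refl(1) e obtain m where "wsort Map.empty P1 (k,m)" "wsort Map.empty Q1 (m,l)"
    by (auto elim: wsSeq)
  then have "(iotas k, iotas m) \<in> R1" "(iotas m, iotas l) \<in> R2"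
    using e inR_step trans.Refl by blast+
  then show ?case using Refl by blast
next
  case (Cut P a c Q R b S)
  then have "inR R1 P" "inR R2 R" by auto
  with Cut(1,2) show ?case by (auto dest: inR_step)
next
  case (IotaL P k l R a b Q)
  then show ?case by meson
next
  case (IotaR P a b R k l Q)
  then show ?case by meson
qed simp_all

lemma inR_seq:
  assumes "inR R1 P" "inR R2 Q"
  shows "inR (R1 O R2) (Seq P Q)"
proof (rule inR_coind[where X="{Seq P Q | P Q. inR R1 P \<and> inR R2 Q}"])
  show "Seq P Q \<in> {Seq P Q | P Q. inR R1 P \<and> inR R2 Q}" using assms by blast
next
  fix T a b T' assume "T \<in> {Seq P Q | P Q. inR R1 P \<and> inR R2 Q}" "trans T a b T'"
  then show "(a,b) \<in> R1 O R2 \<and> T' \<in> {Seq P Q | P Q. inR R1 P \<and> inR R2 Q}"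
    using seq_step by blast
next
  fix T a b assume "T \<in> {Seq P Q | P Q. inR R1 P \<and> inR R2 Q}" "(a,b) \<in> R1 O R2"
  then obtain P1 Q1 c where "T = Seq P1 Q1" "inR R1 P1" "inR R2 Q1" "(a,c)\<in>R1" "(c,b)\<in>R2" by blast
  moreover obtain P2 where "trans P1 a c P2" "inR R1 P2" using calculation inR_ex by metis
  moreover obtain Q2 where "trans Q1 c b Q2" "inR R2 Q2" using calculation inR_ex by metis
  ultimately have "trans T a b (Seq P2 Q2)" "Seq P2 Q2 \<in> {Seq P Q | P Q. inR R1 P \<and> inR R2 Q}"
    using trans.Cut by blast+
  then show "\<exists>T'. trans T a b T' \<and> T' \<in> {Seq P Q | P Q. inR R1 P \<and> inR R2 Q}" by blast
qed

lemma ten_step: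
  assumes "trans T a b T'" "T \<in> {Ten P Q | P Q. inR R1 P \<and> inR R2 Q}"
  shows "(a,b) \<in> tens R1 R2 \<and> T' \<in> {Ten P Q | P Q. inR R1 P \<and> inR R2 Q}"
  using assms
proof (induction rule: trans.induct)
  case (Refl P k l)
  then obtain P1 Q1 where e: "P = Ten P1 Q1" "inR R1 P1" "inR R2 Q1" by blast
  from Refl(1) e obtain k1 k2 l1 l2 where "wsort Map.empty P1 (k1,l1)" "wsort Map.empty Q1 (k2,l2)"
     "k = k1+k2" "l = l1+l2"
    by (auto elim: wsTen)
  moreover have "(iotas k1, iotas l1) \<in> R1" "(iotas k2, iotas l2) \<in> R2"
    using e inR_step trans.Refl calculation by blast+
  ultimately show ?case using Refl unfolding tens_def by (auto simp: iotas_add)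
next
  case (Tensor P a b Q R c d S)
  then have "inR R1 P" "inR R2 R" by auto
  then have "(a,b)\<in>R1" "inR R1 Q" "(c,d)\<in>R2" "inR R2 S" using Tensor(1,2) inR_step by blast+
  then show ?case unfolding tens_def by blast
next
  case (IotaL P k l R a b Q)
  then show ?case by meson
next
  case (IotaR P a b R k l Q)
  then show ?case by meson
qed simp_all

lemma inR_ten:
  assumes "inR R1 P" "inR R2 Q"
  shows "inR (tens R1 R2) (Ten P Q)"
proof (rule inR_coind[where X="{Ten P Q | P Q. inR R1 P \<and> inR R2 Q}"])
  show "Ten P Q \<in> {Ten P Q | P Q. inR R1 P \<and> inR R2 Q}" using assms by blast
next
  fix T a b T' assume "T \<in> {Ten P Q | P Q. inR R1 P \<and> inR R2 Q}" "trans T a b T'"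
  then show "(a,b) \<in> tens R1 R2 \<and> T' \<in> {Ten P Q | P Q. inR R1 P \<and> inR R2 Q}"
    using ten_step by blast
next
  fix T a b assume "T \<in> {Ten P Q | P Q. inR R1 P \<and> inR R2 Q}" "(a,b) \<in> tens R1 R2"
  then obtain P1 Q1 a1 b1 a2 b2 where "T = Ten P1 Q1" "inR R1 P1" "inR R2 Q1" "(a1,b1)\<in>R1" "(a2,b2)\<in>R2"
    "a = a1@a2" "b = b1@b2" unfolding tens_def by blast
  moreover obtain P2 where "trans P1 a1 b1 P2" "inR R1 P2" using calculation inR_ex by metis
  moreover obtain Q2 where "trans Q1 a2 b2 Q2" "inR R2 Q2" using calculation inR_ex by metis
  ultimately have "trans T a b (Ten P2 Q2)" "Ten P2 Q2 \<in> {Ten P Q | P Q. inR R1 P \<and> inR R2 Q}"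
    using trans.Tensor by blast+
  then show "\<exists>T'. trans T a b T' \<and> T' \<in> {Ten P Q | P Q. inR R1 P \<and> inR R2 Q}" by blast
qed


lemma map_subst_atom_id: "set u \<subseteq> range ABind \<Longrightarrow> map (subst_atom \<sigma> B) u = u"
  by (induct u) auto

lemma mu_step:
  fixes u v :: "'s atom list"
  defines "M \<equiv> Mu 0 (length u, length v) (Pref u v (TVar 0))"
  assumes uv: "set u \<subseteq> range ABind" "set v \<subseteq> range ABind"
  assumes "trans T a b T'" "T \<in> {M, Pref u v M}"
  shows "(a,b) \<in> {(inst_word \<sigma> u, inst_word \<sigma> v) | \<sigma>. True} \<and> T' \<in> {M, Pref u v M}"
  using assms(4,5)
proof (induction rule: trans.induct)
  case (Refl P k l)
  then have "(k,l) = (length u, length v)" unfolding M_def by (auto elim: wsMu wsPref)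
  then have "iotas k = inst_word (\<lambda>_. None) u" "iotas l = inst_word (\<lambda>_. None) v"
    unfolding iotas_def inst_word_def using uv by (auto simp: map_replicate_const[symmetric] intro!: map_idI[symmetric]; auto)+
  then show ?case using Refl by blast
next
  case (IotaL P k l R a b Q)
  then show ?case by meson
next
  case (IotaR P a b R k l Q)
  then show ?case by meson
next
  case (Prefix u' v' P \<sigma>)
  then have e: "u' = u" "v' = v" "P = M" unfolding M_def by auto
  have "subst_sig \<sigma> (bd u v) M = M" unfolding M_def using uv by (simp add: map_subst_atom_id Let_def)
  then show ?case using e by blast
next
  case (Rec Y \<tau> P a b Q)
  then have "Y = 0" "\<tau> = (length u, length v)" "P = Pref u v (TVar 0)" unfolding M_def by auto
  then have "subst_rec Y (Mu Y \<tau> P) P = Pref u v M" unfolding M_def by simp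
  then show ?case using Rec by simp
qed (auto simp: M_def)


lemma inR_mu:
  fixes u v :: "'s atom list"
  assumes uv: "set u \<subseteq> range ABind" "set v \<subseteq> range ABind"
  shows "inR {(inst_word \<sigma> u, inst_word \<sigma> v) | \<sigma>. True} (Mu 0 (length u, length v) (Pref u v (TVar 0)))"
proof (rule inR_coind[where X="{Mu 0 (length u, length v) (Pref u v (TVar 0)), Pref u v (Mu 0 (length u, length v) (Pref u v (TVar 0)))}"])
  fix T a b T' assume "T \<in> {Mu 0 (length u, length v) (Pref u v (TVar 0)), Pref u v (Mu 0 (length u, length v) (Pref u v (TVar 0)))}" "trans T a b T'"
  then show "(a, b) \<in> {(inst_word \<sigma> u, inst_word \<sigma> v) | \<sigma>. True} \<and> T' \<in> {Mu 0 (length u, length v) (Pref u v (TVar 0)), Pref u v (Mu 0 (length u, length v) (Pref u v (TVar 0)))}"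
    using mu_step[OF uv] by blast
next
  fix T a b assume T: "T \<in> {Mu 0 (length u, length v) (Pref u v (TVar 0)), Pref u v (Mu 0 (length u, length v) (Pref u v (TVar 0)))}"
    and "(a, b) \<in> {(inst_word \<sigma> u, inst_word \<sigma> v) | \<sigma>. True}"
  then obtain \<sigma> where ab: "a = inst_word \<sigma> u" "b = inst_word \<sigma> v" by blast
  let ?M = "Mu 0 (length u, length v) (Pref u v (TVar 0))"
  have s: "subst_sig \<sigma> (bd u v) ?M = ?M" using uv by (simp add: map_subst_atom_id Let_def)
  have p: "trans (Pref u v ?M) a b ?M" using trans.Prefix[of u v ?M \<sigma>] s ab by simp
  have "trans ?M a b ?M" using trans.Rec[of 0 "(length u, length v)" "Pref u v (TVar 0)" a b ?M] p by simp
  then show "\<exists>T'. trans T a b T' \<and> T' \<in> {?M, Pref u v ?M}" using p T by blast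
qed simp

lemma inR_zero: "inR {([],[])} (zero :: 's wterm)"
proof (rule inR_coind[where X="{zero}"])
  fix T :: "'s wterm" and a b :: "'s lab list" and T' assume "T \<in> {zero}" "trans T a b T'"
  from this(2,1) show "(a,b) \<in> {([],[])} \<and> T' \<in> {zero}"
  proof (induction rule: trans.induct)
    case (Refl P k l)
    then show ?case unfolding zero_def iotas_def by (auto elim: wsMu)
  next
    case (IotaL P k l R a b Q)
    then show ?case by meson
  next
    case (IotaR P a b R k l Q)
    then show ?case by meson
  next
    case (Rec Y \<tau> P a b Q)
    then show ?case unfolding zero_def by auto
  qed (auto simp: zero_def)
next
  fix T :: "'s wterm" and a b :: "'s lab list" assume "T \<in> {zero}" "(a,b) \<in> {([],[])}"
  moreover have "wsort Map.empty (zero::'s wterm) (0,0)" unfolding zero_def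
    by (auto intro!: wsort.intros)
  moreover note trans.Refl[OF this]
  ultimately show "\<exists>T'. trans T a b T' \<and> T' \<in> {zero}" unfolding iotas_def by auto
qed simp

definition RI :: "nat \<Rightarrow> ('s lab list \<times> 's lab list) set" where
  "RI n = {(w,w) | w. length w = n}"
definition RD :: "nat \<Rightarrow> ('s lab list \<times> 's lab list) set" where
  "RD n = {([], w @ rev w) | w. length w = n}"
definition RE :: "nat \<Rightarrow> ('s lab list \<times> 's lab list) set" where
  "RE n = {(w @ rev w, []) | w. length w = n}"

lemma inst_word_range: "inst_word \<sigma> (map ABind [1..<n+1]) = map \<sigma> [1..<n+1]"
  unfolding inst_word_def by simp

lemma inR_I: "inR (RI n) (Iw n :: 's wterm)"
proof (cases "n = 0")
  case True
  have "(RI 0 :: ('s lab list \<times> 's lab list) set) = {([],[])}" unfolding RI_def by auto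
  then show ?thesis using True inR_zero unfolding Iw_def by simp
next
  case False
  let ?u = "map ABind [1..<n+1] :: 's atom list"
  have "inR {(inst_word \<sigma> ?u, inst_word \<sigma> ?u) | \<sigma>. True} (Mu 0 (length ?u, length ?u) (Pref ?u ?u (TVar 0)))"
    by (rule inR_mu) (simp_all add: image_subset_iff)
  moreover have "{(inst_word \<sigma> ?u, inst_word \<sigma> ?u) | \<sigma>. True} = RI n"
  proof
    show "{(inst_word \<sigma> ?u, inst_word \<sigma> ?u) | \<sigma>. True} \<subseteq> RI n" unfolding RI_def inst_word_def by auto
    show "RI n \<subseteq> {(inst_word \<sigma> ?u, inst_word \<sigma> ?u) | \<sigma>. True}"
    proof
      fix x :: "'s lab list \<times> 's lab list" assume "x \<in> RI n"
      then obtain w where w: "x = (w,w)" "length w = n" unfolding RI_def by blast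
      have "map (\<lambda>i. w ! (i - 1)) [1..<n+1] = w" using w(2) by (intro nth_equalityI) (simp_all del: upt_Suc)
      then have "inst_word (\<lambda>i. w ! (i - 1)) ?u = w" using inst_word_range[of "\<lambda>i. w ! (i - 1)" n] by simp
      then show "x \<in> {(inst_word \<sigma> ?u, inst_word \<sigma> ?u) | \<sigma>. True}"
        using w(1) by (intro CollectI exI[of _ "\<lambda>i. w ! (i - 1)"]) simp
    qed
  qed
  ultimately show ?thesis using False unfolding Iw_def by simp
qed

lemma len1: "length w = Suc 0 \<longleftrightarrow> (\<exists>x. w = [x])"
  by (cases w) auto

lemma inR_d: "inR (RD 1) (dd :: 's wterm)"
proof -
  have "inR {(inst_word \<sigma> [], inst_word \<sigma> [ABind 1, ABind 1]) | \<sigma>. True} (dd :: 's wterm)"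
    using inR_mu[of "[] :: 's atom list" "[ABind 1, ABind 1]"] unfolding dd_def by (simp add: numeral_2_eq_2)
  moreover have "{(inst_word \<sigma> [], inst_word \<sigma> [ABind 1, ABind 1]) | \<sigma>. True} = (RD 1 :: ('s lab list \<times> 's lab list) set)"
  proof (intro equalityI subsetI)
    fix x :: "'s lab list \<times> 's lab list"
    assume "x \<in> {(inst_word \<sigma> [], inst_word \<sigma> [ABind 1, ABind 1]) | \<sigma>. True}"
    then obtain \<sigma> where "x = ([], [\<sigma> 1, \<sigma> 1])" unfolding inst_word_def by auto
    then have "x = ([], [\<sigma> 1] @ rev [\<sigma> 1])" by simp
    then show "x \<in> RD 1" unfolding RD_def by (intro CollectI exI[of _ "[\<sigma> 1]"]) simp
  next
    fix x :: "'s lab list \<times> 's lab list"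
    assume "x \<in> RD 1"
    then obtain c where "x = ([], [c, c])" unfolding RD_def by (auto simp: len1)
    then have "x = (inst_word (\<lambda>_. c) [], inst_word (\<lambda>_. c) [ABind 1, ABind 1])" unfolding inst_word_def by simp
    then show "x \<in> {(inst_word \<sigma> [], inst_word \<sigma> [ABind 1, ABind 1]) | \<sigma>. True}" by blast
  qed
  ultimately show ?thesis by simp
qed

lemma inR_e: "inR (RE 1) (ee :: 's wterm)"
proof -
  have "inR {(inst_word \<sigma> [ABind 1, ABind 1], inst_word \<sigma> []) | \<sigma>. True} (ee :: 's wterm)"
    using inR_mu[of "[ABind 1, ABind 1] :: 's atom list" "[]"] unfolding ee_def by (simp add: numeral_2_eq_2)
  moreover have "{(inst_word \<sigma> [ABind 1, ABind 1], inst_word \<sigma> []) | \<sigma>. True} = (RE 1 :: ('s lab list \<times> 's lab list) set)"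
  proof (intro equalityI subsetI)
    fix x :: "'s lab list \<times> 's lab list"
    assume "x \<in> {(inst_word \<sigma> [ABind 1, ABind 1], inst_word \<sigma> []) | \<sigma>. True}"
    then obtain \<sigma> where "x = ([\<sigma> 1, \<sigma> 1], [])" unfolding inst_word_def by auto
    then have "x = ([\<sigma> 1] @ rev [\<sigma> 1], [])" by simp
    then show "x \<in> RE 1" unfolding RE_def by (intro CollectI exI[of _ "[\<sigma> 1]"]) simp
  next
    fix x :: "'s lab list \<times> 's lab list"
    assume "x \<in> RE 1"
    then obtain c where "x = ([c, c], [])" unfolding RE_def by (auto simp: len1)
    then have "x = (inst_word (\<lambda>_. c) [ABind 1, ABind 1], inst_word (\<lambda>_. c) [])" unfolding inst_word_def by simp
    then show "x \<in> {(inst_word \<sigma> [ABind 1, ABind 1], inst_word \<sigma> []) | \<sigma>. True}" by blast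
  qed
  ultimately show ?thesis by simp
qed


lemma L1: "RD 1 O tens (tens (RI 1) (RD m)) (RI 1) = (RD (Suc m) :: ('s lab list \<times> 's lab list) set)"
proof (intro equalityI subsetI)
  fix x :: "'s lab list \<times> 's lab list"
  assume "x \<in> RD 1 O tens (tens (RI 1) (RD m)) (RI 1)"
  then obtain a b c where x: "x = (a,b)" "(a,c) \<in> RD 1" "(c,b) \<in> tens (tens (RI 1) (RD m)) (RI 1)" by blast
  from x(2) obtain y where ac: "a = []" "c = [y,y]" unfolding RD_def by (auto simp: len1)
  from x(3) obtain p q r w where cb: "c = [p] @ [] @ [r]" "b = [p] @ (w @ rev w) @ [r]" "length w = m"
    unfolding tens_def RI_def RD_def by (auto simp: len1)
  from ac cb have "p = y" "r = y" by auto
  then have "b = (y#w) @ rev (y#w)" using cb by simp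
  then show "x \<in> RD (Suc m)" unfolding RD_def using x(1) ac cb(3) by (intro CollectI exI[of _ "y#w"]) simp
next
  fix x :: "'s lab list \<times> 's lab list"
  assume "x \<in> RD (Suc m)"
  then obtain v where v: "x = ([], v @ rev v)" "length v = Suc m" unfolding RD_def by blast
  then obtain y w where yw: "v = y # w" "length w = m" by (cases v) auto
  have "([], [y,y]) \<in> (RD 1 :: ('s lab list \<times> 's lab list) set)" unfolding RD_def
    by (intro CollectI exI[of _ "[y]"]) simp
  moreover have "([y,y], v @ rev v) \<in> tens (tens (RI 1) (RD m)) (RI 1)"
  proof -
    have "([y], [y]) \<in> (RI 1 :: ('s lab list \<times> 's lab list) set)" unfolding RI_def by simp
    moreover have "([], w @ rev w) \<in> (RD m :: ('s lab list \<times> 's lab list) set)" unfolding RD_def using yw by blast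
    ultimately have "([y] @ [], [y] @ (w @ rev w)) \<in> tens (RI 1) (RD m)" unfolding tens_def by blast
    then have "(([y] @ []) @ [y], ([y] @ (w @ rev w)) @ [y]) \<in> tens (tens (RI 1) (RD m)) (RI 1)"
      using \<open>([y], [y]) \<in> RI 1\<close> unfolding tens_def by blast
    then show ?thesis using yw by simp
  qed
  ultimately show "x \<in> RD 1 O tens (tens (RI 1) (RD m)) (RI 1)" using v(1) by blast
qed

lemma L2: "tens (tens (RI (Suc m)) (RE 1)) (RI (Suc m)) O RE (Suc m) = (RE (Suc (Suc m)) :: ('s lab list \<times> 's lab list) set)"
proof (intro equalityI subsetI)
  fix x :: "'s lab list \<times> 's lab list"
  assume "x \<in> tens (tens (RI (Suc m)) (RE 1)) (RI (Suc m)) O RE (Suc m)"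
  then obtain a b c where x: "x = (a,b)" "(a,c) \<in> tens (tens (RI (Suc m)) (RE 1)) (RI (Suc m))" "(c,b) \<in> RE (Suc m)" by blast
  from x(3) obtain w where cb: "c = w @ rev w" "b = []" "length w = Suc m" unfolding RE_def by blast
  from x(2) obtain p y r where ac: "a = (p @ [y,y]) @ r" "c = (p @ []) @ r" "length p = Suc m" "length r = Suc m"
    unfolding tens_def RI_def RE_def by (auto simp: len1)
  from ac cb have "p = w" "r = rev w" by (auto simp: append_eq_append_conv)
  then have "a = (w @ [y]) @ rev (w @ [y])" using ac by simp
  then show "x \<in> RE (Suc (Suc m))" unfolding RE_def using x(1) cb by (intro CollectI exI[of _ "w @ [y]"]) simp
next
  fix x :: "'s lab list \<times> 's lab list"
  assume "x \<in> RE (Suc (Suc m))"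
  then obtain v where v: "x = (v @ rev v, [])" "length v = Suc (Suc m)" unfolding RE_def by blast
  then obtain y w where yw: "v = w @ [y]" "length w = Suc m" by (cases v rule: rev_cases) auto
  have "(w @ rev w, []) \<in> (RE (Suc m) :: ('s lab list \<times> 's lab list) set)" unfolding RE_def using yw by blast
  moreover have "(v @ rev v, w @ rev w) \<in> tens (tens (RI (Suc m)) (RE 1)) (RI (Suc m))"
  proof -
    have "(w, w) \<in> (RI (Suc m) :: ('s lab list \<times> 's lab list) set)" unfolding RI_def using yw by simp
    moreover have "(rev w, rev w) \<in> (RI (Suc m) :: ('s lab list \<times> 's lab list) set)" unfolding RI_def using yw by simp
    moreover have "([y,y], []) \<in> (RE 1 :: ('s lab list \<times> 's lab list) set)" unfolding RE_def
      by (intro CollectI exI[of _ "[y]"]) simp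
    ultimately have "(w @ [y,y], w @ []) \<in> tens (RI (Suc m)) (RE 1)" unfolding tens_def by blast
    then have "((w @ [y,y]) @ rev w, (w @ []) @ rev w) \<in> tens (tens (RI (Suc m)) (RE 1)) (RI (Suc m))"
      using \<open>(rev w, rev w) \<in> RI (Suc m)\<close> unfolding tens_def by blast
    then show ?thesis using yw by simp
  qed
  ultimately show "x \<in> tens (tens (RI (Suc m)) (RE 1)) (RI (Suc m)) O RE (Suc m)" using v(1) by blast
qed


lemma L3: "tens (RD n) (RI n) O tens (RI n) (RE n) = (RI n :: ('s lab list \<times> 's lab list) set)"
proof (intro equalityI subsetI)
  fix x :: "'s lab list \<times> 's lab list"
  assume "x \<in> tens (RD n) (RI n) O tens (RI n) (RE n)"
  then obtain a b c where x: "x = (a,b)" "(a,c) \<in> tens (RD n) (RI n)" "(c,b) \<in> tens (RI n) (RE n)" by blast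
  from x(2) obtain w p where ac: "a = [] @ p" "c = (w @ rev w) @ p" "length w = n" "length p = n"
    unfolding tens_def RI_def RD_def by blast
  from x(3) obtain q v where cb: "c = q @ (v @ rev v)" "b = q @ []" "length q = n" "length v = n"
    unfolding tens_def RI_def RE_def by blast
  from ac(2) cb(1) have "w @ (rev w @ p) = q @ (v @ rev v)" by simp
  then have e1: "w = q \<and> rev w @ p = v @ rev v" using ac(3) cb(3) by (auto simp: append_eq_append_conv)
  then have "rev w = v \<and> p = rev v" using ac(3) cb(4) by (auto simp: append_eq_append_conv)
  then have "a = b" using e1 ac cb by auto
  then show "x \<in> RI n" unfolding RI_def using x(1) ac by simp
next
  fix x :: "'s lab list \<times> 's lab list"
  assume "x \<in> RI n"
  then obtain w where w: "x = (w, w)" "length w = n" unfolding RI_def by blast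
  have "([], w @ rev w) \<in> (RD n :: ('s lab list \<times> 's lab list) set)" unfolding RD_def using w(2) by blast
  then have "([] @ w, (w @ rev w) @ w) \<in> tens (RD n) (RI n)" unfolding tens_def RI_def using w(2) by blast
  moreover have "(rev w @ rev (rev w), []) \<in> (RE n :: ('s lab list \<times> 's lab list) set)" unfolding RE_def using w(2)
    by (intro CollectI exI[of _ "rev w"]) simp
  then have "(w @ (rev w @ rev (rev w)), w @ []) \<in> tens (RI n) (RE n)" unfolding tens_def RI_def using w(2) by blast
  ultimately show "x \<in> tens (RD n) (RI n) O tens (RI n) (RE n)" using w(1) by auto
qed

lemma L4: "tens (RI n) (RD n) O tens (RE n) (RI n) = (RI n :: ('s lab list \<times> 's lab list) set)"
proof (intro equalityI subsetI)
  fix x :: "'s lab list \<times> 's lab list"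
  assume "x \<in> tens (RI n) (RD n) O tens (RE n) (RI n)"
  then obtain a b c where x: "x = (a,b)" "(a,c) \<in> tens (RI n) (RD n)" "(c,b) \<in> tens (RE n) (RI n)" by blast
  from x(2) obtain w p where ac: "a = p @ []" "c = p @ (w @ rev w)" "length w = n" "length p = n"
    unfolding tens_def RI_def RD_def by blast
  from x(3) obtain q v where cb: "c = (v @ rev v) @ q" "b = [] @ q" "length q = n" "length v = n"
    unfolding tens_def RI_def RE_def by blast
  from ac(2) cb(1) have "p @ (w @ rev w) = v @ (rev v @ q)" by simp
  then have e1: "p = v \<and> w @ rev w = rev v @ q" using ac(4) cb(4) by (auto simp: append_eq_append_conv)
  then have "w = rev v \<and> rev w = q" using ac(3) cb(4) by (auto simp: append_eq_append_conv)
  then have "a = b" using e1 ac cb by auto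
  then show "x \<in> RI n" unfolding RI_def using x(1) ac by simp
next
  fix x :: "'s lab list \<times> 's lab list"
  assume "x \<in> RI n"
  then obtain w where w: "x = (w, w)" "length w = n" unfolding RI_def by blast
  have "([], rev w @ rev (rev w)) \<in> (RD n :: ('s lab list \<times> 's lab list) set)" unfolding RD_def using w(2)
    by (intro CollectI exI[of _ "rev w"]) simp
  then have "(w @ [], w @ (rev w @ rev (rev w))) \<in> tens (RI n) (RD n)" unfolding tens_def RI_def using w(2) by blast
  moreover have "(w @ rev w, []) \<in> (RE n :: ('s lab list \<times> 's lab list) set)" unfolding RE_def using w(2) by blast
  then have "((w @ rev w) @ w, [] @ w) \<in> tens (RE n) (RI n)" unfolding tens_def RI_def using w(2) by blast
  ultimately show "x \<in> tens (RI n) (RD n) O tens (RE n) (RI n)" using w(1) by auto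
qed

lemma inR_dn: "inR (RD n) (dn n :: 's wterm)"
proof (induction n rule: dn.induct)
  case 1
  have "(RD 0 :: ('s lab list \<times> 's lab list) set) = {([],[])}" unfolding RD_def by auto
  then show ?case using inR_zero by simp
next
  case 2
  then show ?case using inR_d by simp
next
  case (3 n)
  have "inR (RD 1 O tens (tens (RI 1) (RD (Suc n))) (RI 1)) (dn (Suc (Suc n)) :: 's wterm)"
    using inR_seq[OF inR_d inR_ten[OF inR_ten[OF inR_I 3] inR_I]] by simp
  then show ?case using L1 by metis
qed

lemma inR_en: "inR (RE n) (en n :: 's wterm)"
proof (induction n rule: en.induct)
  case 1
  have "(RE 0 :: ('s lab list \<times> 's lab list) set) = {([],[])}" unfolding RE_def by auto
  then show ?case using inR_zero by simp
next
  case 2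
  then show ?case using inR_e by simp
next
  case (3 n)
  have "inR (tens (tens (RI (Suc n)) (RE 1)) (RI (Suc n)) O RE (Suc n)) (en (Suc (Suc n)) :: 's wterm)"
    using inR_seq[OF inR_ten[OF inR_ten[OF inR_I inR_e] inR_I] 3] by simp
  then show ?case using L2 by metis
qed

theorem mainTheorem5:
  fixes n :: nat
  shows "(Seq (Ten (dn n) (Iw n)) (Ten (Iw n) (en n)) :: 's wterm) \<sim>w Iw n
       \<and> (Iw n :: 's wterm) \<sim>w Seq (Ten (Iw n) (dn n)) (Ten (en n) (Iw n))"
proof
  have "inR (tens (RD n) (RI n) O tens (RI n) (RE n)) (Seq (Ten (dn n) (Iw n)) (Ten (Iw n) (en n)) :: 's wterm)"
    by (rule inR_seq[OF inR_ten[OF inR_dn inR_I] inR_ten[OF inR_I inR_en]])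
  then have "inR (RI n) (Seq (Ten (dn n) (Iw n)) (Ten (Iw n) (en n)) :: 's wterm)" using L3 by metis
  then show "(Seq (Ten (dn n) (Iw n)) (Ten (Iw n) (en n)) :: 's wterm) \<sim>w Iw n"
    using inR_bisim inR_I by blast
next
  have "inR (tens (RI n) (RD n) O tens (RE n) (RI n)) (Seq (Ten (Iw n) (dn n)) (Ten (en n) (Iw n)) :: 's wterm)"
    by (rule inR_seq[OF inR_ten[OF inR_I inR_dn] inR_ten[OF inR_en inR_I]])
  then have "inR (RI n) (Seq (Ten (Iw n) (dn n)) (Ten (en n) (Iw n)) :: 's wterm)" using L4 by metis
  then show "(Iw n :: 's wterm) \<sim>w Seq (Ten (Iw n) (dn n)) (Ten (en n) (Iw n))"
    using inR_bisim inR_I by blast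
qed

end
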